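(* Let $\mathcal E_i\equiv1\to H_i\xrightarrow{\alpha_i}G_i\xrightarrow{\beta_i}K_i\to1$ ($i=1,2$) be central extensions of multiplicative Lie algebras with $\alpha_1(H_1)=\mathcal Z(G_1)$ and $\alpha_2(H_2)=\mathcal Z(G_2)$, and let $(\lambda,\mu,\nu)$ be a morphism from $\mathcal E_1$ to $\mathcal E_2$ such that $\ker\mu\cap{}^M[G_1,G_1]=1$ and $\mu(G_1)\,\alpha_2(H_2)=G_2$. Then $(\lambda,\mu,\nu)$ is an isoclinic morphism.
   Context: A multiplicative Lie algebra is a group $(G,\cdot)$ with a binary operation $\star$ such that for all $x,y,z\in G$: $x\star x=1$; $x\star(yz)=(x\star y)\,{}^y(x\star z)$; $(xy)\star z={}^x(y\star z)(x\star z)$; $((x\star y)\star{}^yz)((y\star z)\star{}^zx)((z\star x)\star{}^xy)=1$; ${}^z(x\star y)={}^zx\star{}^zy$, where ${}^xy=xyx^{-1}$. Homomorphisms preserve both operations. $Z(G)$ is the group center, $LZ(G)=\{x: x\star y=1\ \forall y\}$, $\mathcal Z(G)=LZ(G)\cap Z(G)$; $[x,y]$ is the group commutator; ${}^M[G,G]=(G\star G)[G,G]$ with $G\star G$ the ideal generated by all $a\star b$. A central extension is a short exact sequence $1\to H\xrightarrow{\alpha}G\xrightarrow{\beta}K\to1$ of multiplicative Lie algebras with $\alpha(H)\subseteq\mathcal Z(G)$. A morphism $(\lambda,\mu,\nu)$ from $\mathcal E_1$ to $\mathcal E_2$ consists of homomorphisms $\lambda:H_1\to H_2$, $\mu:G_1\to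 G_2$, $\nu:K_1\to K_2$ with $\mu\alpha_1=\alpha_2\lambda$, $\beta_2\mu=\nu\beta_1$. It is an isoclinic morphism if $\nu$ and $\mu|_{{}^M[G_1,G_1]}:{}^M[G_1,G_1]\to{}^M[G_2,G_2]$ are isomorphisms such that $\mu([g,g'])=[h,h']$ and $\mu(g\star g')=h\star h'$ whenever $g,g'\in G_1$, $h,h'\in G_2$ with $\beta_2(h)=\nu\beta_1(g)$, $\beta_2(h')=\nu\beta_1(g')$. *)

theory Defs
  imports "HOL-Algebra.Coset" "HOL-Algebra.Generated_Groups"
begin

record 'a mla = "'a monoid" + star :: "'a \<Rightarrow> 'a \<Rightarrow> 'a"

definition conjg :: "('a, 'b) monoid_scheme \<Rightarrow> 'a \<Rightarrow> 'a \<Rightarrow> 'a" where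
  "conjg G x y = x \<otimes>\<^bsub>G\<^esub> y \<otimes>\<^bsub>G\<^esub> inv\<^bsub>G\<^esub> x"

definition commg :: "('a, 'b) monoid_scheme \<Rightarrow> 'a \<Rightarrow> 'a \<Rightarrow> 'a" where
  "commg G x y = x \<otimes>\<^bsub>G\<^esub> y \<otimes>\<^bsub>G\<^esub> inv\<^bsub>G\<^esub> x \<otimes>\<^bsub>G\<^esub> inv\<^bsub>G\<^esub> y"

definition mult_lie_alg :: "('a, 'b) mla_scheme \<Rightarrow> bool" where
  "mult_lie_alg G \<longleftrightarrow> group G \<and>
     (\<forall>x\<in>carrier G. \<forall>y\<in>carrier G. star G x y \<in> carrier G) \<and>
     (\<forall>x\<in>carrier G. star G x x = \<one>\<^bsub>G\<^esub>) \<and>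
     (\<forall>x\<in>carrier G. \<forall>y\<in>carrier G. \<forall>z\<in>carrier G.
        star G x (y \<otimes>\<^bsub>G\<^esub> z) = star G x y \<otimes>\<^bsub>G\<^esub> conjg G y (star G x z)) \<and>
     (\<forall>x\<in>carrier G. \<forall>y\<in>carrier G. \<forall>z\<in>carrier G.
        star G (x \<otimes>\<^bsub>G\<^esub> y) z = conjg G x (star G y z) \<otimes>\<^bsub>G\<^esub> star G x z) \<and>
     (\<forall>x\<in>carrier G. \<forall>y\<in>carrier G. \<forall>z\<in>carrier G.
        star G (star G x y) (conjg G y z) \<otimes>\<^bsub>G\<^esub> star G (star G y z) (conjg G z x)
          \<otimes>\<^bsub>G\<^esub> star G (star G z x) (conjg G x y) = \<one>\<^bsub>G\<^esub>) \<and>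
     (\<forall>x\<in>carrier G. \<forall>y\<in>carrier G. \<forall>z\<in>carrier G.
        conjg G z (star G x y) = star G (conjg G z x) (conjg G z y))"

definition mla_hom :: "('a, 'c) mla_scheme \<Rightarrow> ('b, 'd) mla_scheme \<Rightarrow> ('a \<Rightarrow> 'b) set" where
  "mla_hom G H = {f. f \<in> hom G H \<and>
      (\<forall>x\<in>carrier G. \<forall>y\<in>carrier G. f (star G x y) = star H (f x) (f y))}"

definition group_center :: "('a, 'b) monoid_scheme \<Rightarrow> 'a set" where
  "group_center G = {x \<in> carrier G. \<forall>y\<in>carrier G. x \<otimes>\<^bsub>G\<^esub> y = y \<otimes>\<^bsub>G\<^esub> x}"

definition lie_center :: "('a, 'b) mla_scheme \<Rightarrow> 'a set" where
  "lie_center G = {x \<in> carrier G. \<forall>y\<in>carrier G. star G x y = \<one>\<^bsub>G\<^esub>}"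

definition mla_center :: "('a, 'b) mla_scheme \<Rightarrow> 'a set" where
  "mla_center G = lie_center G \<inter> group_center G"

definition mla_ideal :: "'a set \<Rightarrow> ('a, 'b) mla_scheme \<Rightarrow> bool" where
  "mla_ideal I G \<longleftrightarrow> I \<lhd> G \<and> (\<forall>g\<in>carrier G. \<forall>i\<in>I. star G g i \<in> I)"

definition star_ideal :: "('a, 'b) mla_scheme \<Rightarrow> 'a set" where
  "star_ideal G = \<Inter>{I. mla_ideal I G \<and>
       (\<forall>a\<in>carrier G. \<forall>b\<in>carrier G. star G a b \<in> I)}"

definition M_comm :: "('a, 'b) mla_scheme \<Rightarrow> 'a set" where
  "M_comm G = star_ideal G <#>\<^bsub>G\<^esub> derived G (carrier G)"

definition central_extension ::
  "('h, 'x) mla_scheme \<Rightarrow> ('g, 'y) mla_scheme \<Rightarrow> ('k, 'z) mla_scheme \<Rightarrow>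
   ('h \<Rightarrow> 'g) \<Rightarrow> ('g \<Rightarrow> 'k) \<Rightarrow> bool" where
  "central_extension H G K \<alpha> \<beta> \<longleftrightarrow>
     mult_lie_alg H \<and> mult_lie_alg G \<and> mult_lie_alg K \<and>
     \<alpha> \<in> mla_hom H G \<and> \<beta> \<in> mla_hom G K \<and>
     inj_on \<alpha> (carrier H) \<and> \<beta> ` carrier G = carrier K \<and>
     \<alpha> ` carrier H = kernel G K \<beta> \<and>
     \<alpha> ` carrier H \<subseteq> mla_center G"

definition ext_morphism ::
  "('h1, 'x1) mla_scheme \<Rightarrow> ('g1, 'y1) mla_scheme \<Rightarrow> ('k1, 'z1) mla_scheme \<Rightarrow>
   ('h1 \<Rightarrow> 'g1) \<Rightarrow> ('g1 \<Rightarrow> 'k1) \<Rightarrow>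
   ('h2, 'x2) mla_scheme \<Rightarrow> ('g2, 'y2) mla_scheme \<Rightarrow> ('k2, 'z2) mla_scheme \<Rightarrow>
   ('h2 \<Rightarrow> 'g2) \<Rightarrow> ('g2 \<Rightarrow> 'k2) \<Rightarrow>
   ('h1 \<Rightarrow> 'h2) \<Rightarrow> ('g1 \<Rightarrow> 'g2) \<Rightarrow> ('k1 \<Rightarrow> 'k2) \<Rightarrow> bool" where
  "ext_morphism H1 G1 K1 \<alpha>1 \<beta>1 H2 G2 K2 \<alpha>2 \<beta>2 lam \<mu> \<nu> \<longleftrightarrow>
     lam \<in> mla_hom H1 H2 \<and> \<mu> \<in> mla_hom G1 G2 \<and> \<nu> \<in> mla_hom K1 K2 \<and>
     (\<forall>h\<in>carrier H1. \<mu> (\<alpha>1 h) = \<alpha>2 (lam h)) \<and>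
     (\<forall>g\<in>carrier G1. \<beta>2 (\<mu> g) = \<nu> (\<beta>1 g))"

definition isoclinic_morphism ::
  "('h1, 'x1) mla_scheme \<Rightarrow> ('g1, 'y1) mla_scheme \<Rightarrow> ('k1, 'z1) mla_scheme \<Rightarrow>
   ('h1 \<Rightarrow> 'g1) \<Rightarrow> ('g1 \<Rightarrow> 'k1) \<Rightarrow>
   ('h2, 'x2) mla_scheme \<Rightarrow> ('g2, 'y2) mla_scheme \<Rightarrow> ('k2, 'z2) mla_scheme \<Rightarrow>
   ('h2 \<Rightarrow> 'g2) \<Rightarrow> ('g2 \<Rightarrow> 'k2) \<Rightarrow>
   ('h1 \<Rightarrow> 'h2) \<Rightarrow> ('g1 \<Rightarrow> 'g2) \<Rightarrow> ('k1 \<Rightarrow> 'k2) \<Rightarrow> bool" where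
  "isoclinic_morphism H1 G1 K1 \<alpha>1 \<beta>1 H2 G2 K2 \<alpha>2 \<beta>2 lam \<mu> \<nu> \<longleftrightarrow>
     ext_morphism H1 G1 K1 \<alpha>1 \<beta>1 H2 G2 K2 \<alpha>2 \<beta>2 lam \<mu> \<nu> \<and>
     bij_betw \<nu> (carrier K1) (carrier K2) \<and>
     bij_betw \<mu> (M_comm G1) (M_comm G2) \<and>
     (\<forall>g\<in>carrier G1. \<forall>g'\<in>carrier G1. \<forall>h\<in>carrier G2. \<forall>h'\<in>carrier G2.
        \<beta>2 h = \<nu> (\<beta>1 g) \<longrightarrow> \<beta>2 h' = \<nu> (\<beta>1 g') \<longrightarrow>
        \<mu> (commg G1 g g') = commg G2 h h' \<and> \<mu> (star G1 g g') = star G2 h h')"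

end

theory Submission
  imports Defs "HOL-Algebra.Zassenhaus"
begin

lemma (in group) inv_cancel_assoc: "x \<in> carrier G \<Longrightarrow> z \<in> carrier G \<Longrightarrow> inv x \<otimes> (x \<otimes> z) = z"
  by (simp add: m_assoc[symmetric])
lemma (in group) inv_cancel_assoc': "x \<in> carrier G \<Longrightarrow> z \<in> carrier G \<Longrightarrow> x \<otimes> (inv x \<otimes> z) = z"
  by (simp add: m_assoc[symmetric])

context fixes G :: "('a,'b) mla_scheme" (structure) begin

lemma mla_group: "mult_lie_alg G \<Longrightarrow> group G" by (simp add: mult_lie_alg_def)
lemma mla_star_closed: "mult_lie_alg G \<Longrightarrow> x \<in> carrier G \<Longrightarrow> y \<in> carrier G \<Longrightarrow> star G x y \<in> carrier G"
  by (simp add: mult_lie_alg_def)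
lemma mla_self: "mult_lie_alg G \<Longrightarrow> x \<in> carrier G \<Longrightarrow> star G x x = \<one>"
  by (simp add: mult_lie_alg_def)
lemma mla_ax4: "mult_lie_alg G \<Longrightarrow> x \<in> carrier G \<Longrightarrow> y \<in> carrier G \<Longrightarrow> z \<in> carrier G \<Longrightarrow>
   star G x (y \<otimes> z) = star G x y \<otimes> conjg G y (star G x z)"
  by (simp add: mult_lie_alg_def)
lemma mla_ax5: "mult_lie_alg G \<Longrightarrow> x \<in> carrier G \<Longrightarrow> y \<in> carrier G \<Longrightarrow> z \<in> carrier G \<Longrightarrow>
   star G (x \<otimes> y) z = conjg G x (star G y z) \<otimes> star G x z"
  by (simp add: mult_lie_alg_def)

lemma conjg_one: "group G \<Longrightarrow> x \<in> carrier G \<Longrightarrow> conjg G x \<one> = \<one>"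
  by (simp add: conjg_def group.r_inv monoid.r_one group.is_monoid)
lemma conjg_carrier: "group G \<Longrightarrow> x \<in> carrier G \<Longrightarrow> a \<in> carrier G \<Longrightarrow> conjg G x a \<in> carrier G"
  by (simp add: conjg_def group.inv_closed monoid.m_closed group.is_monoid)
lemma conjg_mult: "group G \<Longrightarrow> x \<in> carrier G \<Longrightarrow> a \<in> carrier G \<Longrightarrow> b \<in> carrier G \<Longrightarrow>
  conjg G x a \<otimes> conjg G x b = conjg G x (a \<otimes> b)"
proof -
  assume "group G" then interpret group G .
  assume "x \<in> carrier G" "a \<in> carrier G" "b \<in> carrier G"
  then show ?thesis by (simp add: conjg_def m_assoc inv_cancel_assoc)
qed
lemma conjg_eq_one: "group G \<Longrightarrow> x \<in> carrier G \<Longrightarrow> a \<in> carrier G \<Longrightarrow> conjg G x a = \<one> \<Longrightarrow> a = \<one>"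
proof -
  assume "group G" then interpret group G .
  assume x: "x \<in> carrier G" "a \<in> carrier G" "conjg G x a = \<one>"
  then have "x \<otimes> a = x" unfolding conjg_def
    by (metis inv_closed m_closed inv_equality inv_inv)
  then show ?thesis using x by simp
qed

lemma mla_antisym:
  assumes G: "mult_lie_alg G" and x: "x \<in> carrier G" and y: "y \<in> carrier G"
  shows "star G y x \<otimes> star G x y = \<one>"
proof -
  interpret group G using mla_group[OF G] .
  have xy: "x \<otimes> y \<in> carrier G" using x y by simp
  have e1: "star G y (x \<otimes> y) = star G y x"
    using mla_ax4[OF G y x y] mla_self[OF G y] conjg_one[OF is_group x] mla_star_closed[OF G y x] by simp
  have e2: "star G x (x \<otimes> y) = conjg G x (star G x y)"
    using mla_ax4[OF G x x y] mla_self[OF G x] conjg_carrier[OF is_group x mla_star_closed[OF G x y]] by simp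
  have "\<one> = star G (x \<otimes> y) (x \<otimes> y)" using mla_self[OF G xy] by simp
  also have "\<dots> = conjg G x (star G y x) \<otimes> conjg G x (star G x y)"
    using mla_ax5[OF G x y xy] e1 e2 by simp
  also have "\<dots> = conjg G x (star G y x \<otimes> star G x y)"
    using conjg_mult[OF is_group x] mla_star_closed[OF G] x y by simp
  finally show ?thesis using conjg_eq_one[OF is_group x] mla_star_closed[OF G] x y by simp
qed

lemma mla_star_center_right:
  assumes G: "mult_lie_alg G" and x: "x \<in> carrier G" and c: "c \<in> lie_center G"
  shows "star G x c = \<one>"
proof -
  interpret group G using mla_group[OF G] .
  have "c \<in> carrier G" "star G c x = \<one>" using c x unfolding lie_center_def by auto
  then show ?thesis using mla_antisym[OF G x \<open>c \<in> carrier G\<close>] mla_star_closed[OF G] x by simp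
qed

lemma mla_star_center:
  assumes G: "mult_lie_alg G" and x: "x \<in> carrier G" and y: "y \<in> carrier G"
    and c: "c \<in> mla_center G" and d: "d \<in> mla_center G"
  shows "star G (x \<otimes> c) (y \<otimes> d) = star G x y"
proof -
  interpret group G using mla_group[OF G] .
  have cc: "c \<in> carrier G" "d \<in> carrier G" "c \<in> lie_center G" "d \<in> lie_center G"
    using c d unfolding mla_center_def lie_center_def by auto
  have "star G (x \<otimes> c) (y \<otimes> d) = conjg G x (star G c (y \<otimes> d)) \<otimes> star G x (y \<otimes> d)"
    using mla_ax5[OF G x] cc x y by simp
  also have "star G c (y \<otimes> d) = \<one>" using cc(3) x y cc unfolding lie_center_def by auto
  also have "star G x (y \<otimes> d) = star G x y \<otimes> conjg G y (star G x d)"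
    using mla_ax4[OF G x y] cc by simp
  also have "star G x d = \<one>" using mla_star_center_right[OF G x cc(4)] .
  finally show ?thesis using conjg_one[OF is_group] x y mla_star_closed[OF G x y] by simp
qed

lemma commg_center:
  assumes G: "group G" and x: "x \<in> carrier G" and y: "y \<in> carrier G"
    and c: "c \<in> group_center G" and d: "d \<in> group_center G"
  shows "commg G (x \<otimes> c) (y \<otimes> d) = commg G x y"
proof -
  interpret group G using G .
  have cc: "c \<in> carrier G" "d \<in> carrier G" using c d unfolding group_center_def by auto
  have cz: "\<And>z. z \<in> carrier G \<Longrightarrow> c \<otimes> z = z \<otimes> c" "\<And>z. z \<in> carrier G \<Longrightarrow> d \<otimes> z = z \<otimes> d"
    using c d unfolding group_center_def by auto
  have "commg G (x \<otimes> c) (y \<otimes> d) = x \<otimes> (c \<otimes> (y \<otimes> d)) \<otimes> (inv c \<otimes> inv x) \<otimes> (inv d \<otimes> inv y)"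
    unfolding commg_def using x y cc by (simp add: inv_mult_group m_assoc)
  also have "c \<otimes> (y \<otimes> d) = y \<otimes> d \<otimes> c" using cz(1)[of "y \<otimes> d"] x y cc by simp
  finally have "commg G (x \<otimes> c) (y \<otimes> d) = x \<otimes> y \<otimes> (d \<otimes> (c \<otimes> inv c)) \<otimes> inv x \<otimes> (inv d \<otimes> inv y)"
    using x y cc by (simp add: m_assoc inv_cancel_assoc')
  also have "\<dots> = x \<otimes> y \<otimes> inv x \<otimes> (d \<otimes> inv d) \<otimes> inv y"
    using x y cc cz(2)[of "inv x"] by (simp add: m_assoc inv_cancel_assoc')
  finally show ?thesis unfolding commg_def using x y cc by simp
qed


lemma mla_star_center_left:
  assumes G: "mult_lie_alg G" and x: "x \<in> carrier G" and y: "y \<in> carrier G"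
    and c: "c \<in> mla_center G"
  shows "star G (x \<otimes> c) y = star G x y"
proof -
  interpret group G using mla_group[OF G] .
  have cc: "c \<in> carrier G" "c \<in> lie_center G"
    using c unfolding mla_center_def lie_center_def by auto
  have "star G (x \<otimes> c) y = conjg G x (star G c y) \<otimes> star G x y"
    using mla_ax5[OF G x] cc x y by simp
  also have "star G c y = \<one>" using cc(2) y unfolding lie_center_def by auto
  finally show ?thesis using conjg_one[OF is_group] x y mla_star_closed[OF G x y] by simp
qed

lemma conj_center:
  assumes G: "group G" and x: "x \<in> carrier G" and a: "a \<in> carrier G"
    and c: "c \<in> group_center G"
  shows "(x \<otimes> c) \<otimes> a \<otimes> inv (x \<otimes> c) = x \<otimes> a \<otimes> inv x"
proof -
  interpret group G using G .
  have cc: "c \<in> carrier G" "\<And>z. z \<in> carrier G \<Longrightarrow> c \<otimes> z = z \<otimes> c"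
    using c unfolding group_center_def by auto
  have "(x \<otimes> c) \<otimes> a \<otimes> inv (x \<otimes> c) = x \<otimes> (c \<otimes> (a \<otimes> inv c)) \<otimes> inv x"
    using x a cc(1) by (simp add: inv_mult_group m_assoc)
  also have "c \<otimes> (a \<otimes> inv c) = a" using cc(2)[of a] a cc(1) by (simp add: m_assoc[symmetric]) (simp add: m_assoc)
  finally show ?thesis .
qed

lemma commg_central_left:
  assumes G: "group G" and c: "c \<in> group_center G" and y: "y \<in> carrier G"
  shows "commg G c y = \<one>"
proof -
  interpret group G using G .
  have cc: "c \<in> carrier G" "c \<otimes> y = y \<otimes> c" using c y unfolding group_center_def by auto
  then show ?thesis unfolding commg_def using y by (simp add: m_assoc r_inv)
qed

lemma commg_one_comm:
  assumes G: "group G" and x: "x \<in> carrier G" and y: "y \<in> carrier G" and e: "commg G x y = \<one>"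
  shows "x \<otimes> y = y \<otimes> x"
proof -
  interpret group G using G .
  have "x \<otimes> y \<otimes> inv x \<otimes> inv y \<otimes> y \<otimes> x = y \<otimes> x" using e x y unfolding commg_def by simp
  then show ?thesis using x y by (simp add: m_assoc inv_cancel_assoc)
qed

lemma derived_set_commg: "derived_set G (carrier G) = {commg G x y | x y. x \<in> carrier G \<and> y \<in> carrier G}"
  by (auto simp: commg_def)

lemma si_star: "a \<in> carrier G \<Longrightarrow> b \<in> carrier G \<Longrightarrow> star G a b \<in> star_ideal G"
  unfolding star_ideal_def by blast

lemma si_lower: "mla_ideal I G \<Longrightarrow> (\<forall>a\<in>carrier G. \<forall>b\<in>carrier G. star G a b \<in> I) \<Longrightarrow> star_ideal G \<subseteq> I"
  unfolding star_ideal_def by blast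

lemma carrier_ideal: assumes G: "mult_lie_alg G" shows "mla_ideal (carrier G) G"
proof -
  interpret group G using mla_group[OF G] .
  show ?thesis unfolding mla_ideal_def
    using normal_inv_iff subgroup_self mla_star_closed[OF G] by auto
qed

lemma si_ideal: assumes G: "mult_lie_alg G" shows "mla_ideal (star_ideal G) G"
proof -
  interpret group G using mla_group[OF G] .
  let ?A = "{I. mla_ideal I G \<and> (\<forall>a\<in>carrier G. \<forall>b\<in>carrier G. star G a b \<in> I)}"
  have ne: "carrier G \<in> ?A" using carrier_ideal[OF G] mla_star_closed[OF G] by auto
  have sg: "subgroup (star_ideal G) G" unfolding star_ideal_def
    apply (rule subgroups_Inter)
    using ne by (auto simp: mla_ideal_def normal_imp_subgroup)
  have cj: "\<forall>x\<in>carrier G. \<forall>h\<in>star_ideal G. x \<otimes> h \<otimes> inv x \<in> star_ideal G"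
    unfolding star_ideal_def mla_ideal_def using normal_inv_iff by auto
  have st: "\<forall>g\<in>carrier G. \<forall>i\<in>star_ideal G. star G g i \<in> star_ideal G"
    unfolding star_ideal_def mla_ideal_def by auto
  show ?thesis unfolding mla_ideal_def using sg cj st normal_inv_iff by auto
qed

lemma si_carrier: "mult_lie_alg G \<Longrightarrow> star_ideal G \<subseteq> carrier G"
  using si_lower carrier_ideal mla_star_closed by blast

lemma Mc_subgroup: assumes G: "mult_lie_alg G" shows "subgroup (M_comm G) G"
proof -
  interpret group G using mla_group[OF G] .
  show ?thesis unfolding M_comm_def
    using mult_norm_subgroup si_ideal[OF G] derived_is_subgroup[of "carrier G"]
    unfolding mla_ideal_def by auto
qed

lemma star_in_Mc: assumes G: "mult_lie_alg G" and "a \<in> carrier G" "b \<in> carrier G"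
  shows "star G a b \<in> M_comm G"
proof -
  interpret group G using mla_group[OF G] .
  have "star G a b \<otimes> \<one> \<in> M_comm G" unfolding M_comm_def set_mult_def
    using si_star assms subgroup.one_closed[OF derived_is_subgroup[of "carrier G"]] by blast
  then show ?thesis using mla_star_closed assms by simp
qed

lemma commg_in_Mc: assumes G: "mult_lie_alg G" and "a \<in> carrier G" "b \<in> carrier G"
  shows "commg G a b \<in> M_comm G"
proof -
  interpret group G using mla_group[OF G] .
  have d: "commg G a b \<in> derived G (carrier G)" unfolding derived_def derived_set_commg
    using assms by (blast intro: generate.incl)
  have "\<one> \<otimes> commg G a b \<in> M_comm G" unfolding M_comm_def set_mult_def
    using d subgroup.one_closed[OF mla_ideal_def[THEN iffD1, OF si_ideal[OF G], THEN conjunct1, THEN normal_imp_subgroup]] by blast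
  moreover have "commg G a b \<in> carrier G" using assms unfolding commg_def by simp
  ultimately show ?thesis by simp
qed

end

theorem proposition4p8:
  assumes E1: "central_extension H1 G1 K1 \<alpha>1 \<beta>1"
      and E2: "central_extension H2 G2 K2 \<alpha>2 \<beta>2"
      and Z1: "\<alpha>1 ` carrier H1 = mla_center G1"
      and Z2: "\<alpha>2 ` carrier H2 = mla_center G2"
      and mor: "ext_morphism H1 G1 K1 \<alpha>1 \<beta>1 H2 G2 K2 \<alpha>2 \<beta>2 lam \<mu> \<nu>"
      and ker: "kernel G1 G2 \<mu> \<inter> M_comm G1 = {\<one>\<^bsub>G1\<^esub>}"
      and surj: "(\<mu> ` carrier G1) <#>\<^bsub>G2\<^esub> (\<alpha>2 ` carrier H2) = carrier G2"
  shows "isoclinic_morphism H1 G1 K1 \<alpha>1 \<beta>1 H2 G2 K2 \<alpha>2 \<beta>2 lam \<mu> \<nu>"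
proof -
  have M1: "mult_lie_alg G1" and M2: "mult_lie_alg G2" and MK1: "mult_lie_alg K1" and MK2: "mult_lie_alg K2"
    using E1 E2 unfolding central_extension_def by auto
  interpret g1: group G1 using mla_group[OF M1] .
  interpret g2: group G2 using mla_group[OF M2] .
  have muh: "\<mu> \<in> hom G1 G2" and mus: "\<And>x y. x \<in> carrier G1 \<Longrightarrow> y \<in> carrier G1 \<Longrightarrow> \<mu> (star G1 x y) = star G2 (\<mu> x) (\<mu> y)"
    and nuh: "\<nu> \<in> hom K1 K2"
    and comm2: "\<And>g. g \<in> carrier G1 \<Longrightarrow> \<beta>2 (\<mu> g) = \<nu> (\<beta>1 g)"
    using mor unfolding ext_morphism_def mla_hom_def by auto
  have b1h: "\<beta>1 \<in> hom G1 K1" and b1s: "\<beta>1 ` carrier G1 = carrier K1"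
    and k1: "\<alpha>1 ` carrier H1 = kernel G1 K1 \<beta>1"
    using E1 unfolding central_extension_def mla_hom_def by auto
  have b2h: "\<beta>2 \<in> hom G2 K2" and b2s: "\<beta>2 ` carrier G2 = carrier K2"
    and k2: "\<alpha>2 ` carrier H2 = kernel G2 K2 \<beta>2"
    using E2 unfolding central_extension_def mla_hom_def by auto
  interpret mu: group_hom G1 G2 \<mu> using muh by (simp add: group_hom_def group_hom_axioms_def g1.is_group g2.is_group)
  interpret nu: group_hom K1 K2 \<nu> using nuh mla_group[OF MK1] mla_group[OF MK2] by (simp add: group_hom_def group_hom_axioms_def)
  interpret b1: group_hom G1 K1 \<beta>1 using b1h mla_group[OF MK1] by (simp add: group_hom_def group_hom_axioms_def g1.is_group)
  interpret b2: group_hom G2 K2 \<beta>2 using b2h mla_group[OF MK2] by (simp add: group_hom_def group_hom_axioms_def g2.is_group)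
  have muc: "\<And>x y. x \<in> carrier G1 \<Longrightarrow> y \<in> carrier G1 \<Longrightarrow> \<mu> (commg G1 x y) = commg G2 (\<mu> x) (\<mu> y)"
    unfolding commg_def by simp
  have cen: "mla_center G2 \<subseteq> group_center G2" "mla_center G2 \<subseteq> lie_center G2" "mla_center G2 \<subseteq> carrier G2"
    unfolding mla_center_def group_center_def by auto
  have decomp: "\<And>h. h \<in> carrier G2 \<Longrightarrow> \<exists>g\<in>carrier G1. \<exists>c\<in>mla_center G2. h = \<mu> g \<otimes>\<^bsub>G2\<^esub> c"
  proof -
    fix h assume "h \<in> carrier G2"
    then have "h \<in> (\<mu> ` carrier G1) <#>\<^bsub>G2\<^esub> mla_center G2" using surj Z2 by simp
    then show "\<exists>g\<in>carrier G1. \<exists>c\<in>mla_center G2. h = \<mu> g \<otimes>\<^bsub>G2\<^esub> c"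
      unfolding set_mult_def by blast
  qed
  have lift: "\<exists>c\<in>mla_center G2. h = \<mu> g \<otimes>\<^bsub>G2\<^esub> c"
    if g: "g \<in> carrier G1" and h: "h \<in> carrier G2" and e: "\<beta>2 h = \<nu> (\<beta>1 g)" for g h
  proof -
    let ?c = "inv\<^bsub>G2\<^esub> (\<mu> g) \<otimes>\<^bsub>G2\<^esub> h"
    have "\<beta>2 ?c = \<one>\<^bsub>K2\<^esub>" using g h e comm2[OF g] by (simp add: b2.hom_mult b2.hom_inv)
    then have "?c \<in> mla_center G2" using k2 Z2 g h unfolding kernel_def by auto
    moreover have "h = \<mu> g \<otimes>\<^bsub>G2\<^esub> ?c" using g h by (simp add: g2.inv_cancel_assoc')
    ultimately show ?thesis by blast
  qed
  have pull: "g \<in> mla_center G1" if g: "g \<in> carrier G1" and c: "\<mu> g \<in> mla_center G2" for g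
  proof -
    have "g \<otimes>\<^bsub>G1\<^esub> y = y \<otimes>\<^bsub>G1\<^esub> g \<and> star G1 g y = \<one>\<^bsub>G1\<^esub>" if y: "y \<in> carrier G1" for y
    proof -
      have "\<mu> (commg G1 g y) = \<one>\<^bsub>G2\<^esub>" using muc[OF g y] commg_central_left[OF g2.is_group] c cen y by auto
      then have "commg G1 g y \<in> kernel G1 G2 \<mu> \<inter> M_comm G1"
        using commg_in_Mc[OF M1 g y] g y unfolding kernel_def commg_def by auto
      then have a: "g \<otimes>\<^bsub>G1\<^esub> y = y \<otimes>\<^bsub>G1\<^esub> g" using ker commg_one_comm[OF g1.is_group g y] by auto
      have "\<mu> (star G1 g y) = \<one>\<^bsub>G2\<^esub>" using mus[OF g y] c cen y unfolding lie_center_def by auto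
      then have "star G1 g y \<in> kernel G1 G2 \<mu> \<inter> M_comm G1"
        using star_in_Mc[OF M1 g y] mla_star_closed[OF M1 g y] unfolding kernel_def by auto
      with a ker show ?thesis by auto
    qed
    then show ?thesis using g unfolding mla_center_def lie_center_def group_center_def by auto
  qed
  have nu_inj: "inj_on \<nu> (carrier K1)"
  proof -
    have "kernel K1 K2 \<nu> = {\<one>\<^bsub>K1\<^esub>}"
    proof
      show "kernel K1 K2 \<nu> \<subseteq> {\<one>\<^bsub>K1\<^esub>}"
      proof
        fix k assume k: "k \<in> kernel K1 K2 \<nu>"
        then obtain g where g: "g \<in> carrier G1" "k = \<beta>1 g" using b1s unfolding kernel_def by auto
        have "\<mu> g \<in> mla_center G2" using k g comm2[OF g(1)] k2 Z2 unfolding kernel_def by auto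
        then have "g \<in> mla_center G1" using pull g by auto
        then show "k \<in> {\<one>\<^bsub>K1\<^esub>}" using Z1 k1 g unfolding kernel_def by auto
      qed
      show "{\<one>\<^bsub>K1\<^esub>} \<subseteq> kernel K1 K2 \<nu>" unfolding kernel_def by auto
    qed
    then show ?thesis using nu.inj_iff_trivial_ker by simp
  qed
  have nu_surj: "\<nu> ` carrier K1 = carrier K2"
  proof
    show "\<nu> ` carrier K1 \<subseteq> carrier K2" by auto
    show "carrier K2 \<subseteq> \<nu> ` carrier K1"
    proof
      fix k assume "k \<in> carrier K2"
      then obtain h where h: "h \<in> carrier G2" "k = \<beta>2 h" using b2s by auto
      then obtain g c where gc: "g \<in> carrier G1" "c \<in> mla_center G2" "h = \<mu> g \<otimes>\<^bsub>G2\<^esub> c" using decomp by blast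
      have "\<beta>2 c = \<one>\<^bsub>K2\<^esub>" using gc(2) k2 Z2 unfolding kernel_def by auto
      then have "k = \<nu> (\<beta>1 g)" using h gc cen comm2[OF gc(1)] by (auto simp: b2.hom_mult)
      then show "k \<in> \<nu> ` carrier K1" using gc by auto
    qed
  qed
  have cond: "\<mu> (commg G1 g g') = commg G2 h h' \<and> \<mu> (star G1 g g') = star G2 h h'"
    if g: "g \<in> carrier G1" "g' \<in> carrier G1" and h: "h \<in> carrier G2" "h' \<in> carrier G2"
      and e: "\<beta>2 h = \<nu> (\<beta>1 g)" "\<beta>2 h' = \<nu> (\<beta>1 g')" for g g' h h'
  proof -
    obtain c where c: "c \<in> mla_center G2" "h = \<mu> g \<otimes>\<^bsub>G2\<^esub> c" using lift g h e by blast
    obtain c' where c': "c' \<in> mla_center G2" "h' = \<mu> g' \<otimes>\<^bsub>G2\<^esub> c'" using lift g h e by blast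
    have "commg G2 h h' = commg G2 (\<mu> g) (\<mu> g')"
      using commg_center[OF g2.is_group, of "\<mu> g" "\<mu> g'" c c'] c c' g cen by auto
    moreover have "star G2 h h' = star G2 (\<mu> g) (\<mu> g')"
      using mla_star_center[OF M2, of "\<mu> g" "\<mu> g'" c c'] c c' g by auto
    ultimately show ?thesis using muc mus g by auto
  qed
  have mu_inj: "inj_on \<mu> (M_comm G1)"
  proof
    fix x y assume x: "x \<in> M_comm G1" and y: "y \<in> M_comm G1" and e: "\<mu> x = \<mu> y"
    have sg: "subgroup (M_comm G1) G1" using Mc_subgroup[OF M1] .
    have xc: "x \<in> carrier G1" "y \<in> carrier G1" using x y subgroup.subset[OF sg] by auto
    have "x \<otimes>\<^bsub>G1\<^esub> inv\<^bsub>G1\<^esub> y \<in> M_comm G1" using x y sg by (simp add: subgroup.m_closed subgroup.m_inv_closed)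
    moreover have "\<mu> (x \<otimes>\<^bsub>G1\<^esub> inv\<^bsub>G1\<^esub> y) = \<one>\<^bsub>G2\<^esub>" using e xc by simp
    ultimately have "x \<otimes>\<^bsub>G1\<^esub> inv\<^bsub>G1\<^esub> y \<in> kernel G1 G2 \<mu> \<inter> M_comm G1"
      using xc unfolding kernel_def by simp
    then have 1: "x \<otimes>\<^bsub>G1\<^esub> inv\<^bsub>G1\<^esub> y = \<one>\<^bsub>G1\<^esub>" using ker by blast
    have "x = x \<otimes>\<^bsub>G1\<^esub> inv\<^bsub>G1\<^esub> y \<otimes>\<^bsub>G1\<^esub> y" using xc by (simp add: g1.m_assoc)
    then show "x = y" using 1 xc by simp
  qed
  have si_img: "\<mu> ` star_ideal G1 = star_ideal G2"
  proof
    show "\<mu> ` star_ideal G1 \<subseteq> star_ideal G2"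
    proof (unfold star_ideal_def, rule subsetI, rule InterI)
      fix z I assume z: "z \<in> \<mu> ` \<Inter>{I. mla_ideal I G1 \<and> (\<forall>a\<in>carrier G1. \<forall>b\<in>carrier G1. star G1 a b \<in> I)}"
        and I: "I \<in> {I. mla_ideal I G2 \<and> (\<forall>a\<in>carrier G2. \<forall>b\<in>carrier G2. star G2 a b \<in> I)}"
      have In: "I \<lhd> G2" and Is: "\<forall>g\<in>carrier G2. \<forall>i\<in>I. star G2 g i \<in> I"
        and Ist: "\<forall>a\<in>carrier G2. \<forall>b\<in>carrier G2. star G2 a b \<in> I"
        using I unfolding mla_ideal_def by auto
      have Isg: "subgroup I G2" using In normal_imp_subgroup by blast
      let ?J = "{y \<in> carrier G1. \<mu> y \<in> I}"
      have Jsg: "subgroup ?J G1"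
        by (rule g1.subgroupI) (auto simp: subgroup.one_closed[OF Isg] subgroup.m_inv_closed[OF Isg] subgroup.m_closed[OF Isg])
      have Jc: "\<forall>x\<in>carrier G1. \<forall>h\<in>?J. x \<otimes>\<^bsub>G1\<^esub> h \<otimes>\<^bsub>G1\<^esub> inv\<^bsub>G1\<^esub> x \<in> ?J"
        using In g2.normal_inv_iff by auto
      have "mla_ideal ?J G1" unfolding mla_ideal_def
        using Jsg Jc g1.normal_inv_iff Is mus mla_star_closed[OF M1] by auto
      moreover have "\<forall>a\<in>carrier G1. \<forall>b\<in>carrier G1. star G1 a b \<in> ?J"
        using Ist mus mla_star_closed[OF M1] by auto
      ultimately have "star_ideal G1 \<subseteq> ?J" using si_lower by blast
      then show "z \<in> I" using z unfolding star_ideal_def by auto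
    qed
    show "star_ideal G2 \<subseteq> \<mu> ` star_ideal G1"
    proof (rule si_lower)
      have I1: "mla_ideal (star_ideal G1) G1" using si_ideal[OF M1] .
      have sc: "star_ideal G1 \<subseteq> carrier G1" using si_carrier[OF M1] .
      have sg: "subgroup (\<mu> ` star_ideal G1) G2"
        using mu.subgroup_img_is_subgroup I1 normal_imp_subgroup unfolding mla_ideal_def by blast
      have cj: "\<forall>x\<in>carrier G2. \<forall>h\<in>\<mu> ` star_ideal G1. x \<otimes>\<^bsub>G2\<^esub> h \<otimes>\<^bsub>G2\<^esub> inv\<^bsub>G2\<^esub> x \<in> \<mu> ` star_ideal G1"
      proof (intro ballI)
        fix x h assume x: "x \<in> carrier G2" and h: "h \<in> \<mu> ` star_ideal G1"
        obtain i where i: "i \<in> star_ideal G1" "h = \<mu> i" using h by auto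
        obtain g c where gc: "g \<in> carrier G1" "c \<in> mla_center G2" "x = \<mu> g \<otimes>\<^bsub>G2\<^esub> c" using decomp x by blast
        have "x \<otimes>\<^bsub>G2\<^esub> h \<otimes>\<^bsub>G2\<^esub> inv\<^bsub>G2\<^esub> x = \<mu> (g \<otimes>\<^bsub>G1\<^esub> i \<otimes>\<^bsub>G1\<^esub> inv\<^bsub>G1\<^esub> g)"
        proof -
          have ic: "i \<in> carrier G1" "c \<in> group_center G2" using i sc gc cen by auto
          have "x \<otimes>\<^bsub>G2\<^esub> h \<otimes>\<^bsub>G2\<^esub> inv\<^bsub>G2\<^esub> x = \<mu> g \<otimes>\<^bsub>G2\<^esub> \<mu> i \<otimes>\<^bsub>G2\<^esub> inv\<^bsub>G2\<^esub> (\<mu> g)"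
            using conj_center[OF g2.is_group, of "\<mu> g" "\<mu> i" c] gc(1,3) i(2) ic by simp
          then show ?thesis using gc(1) ic(1) by simp
        qed
        moreover have "g \<otimes>\<^bsub>G1\<^esub> i \<otimes>\<^bsub>G1\<^esub> inv\<^bsub>G1\<^esub> g \<in> star_ideal G1"
          using I1 gc i g1.normal_inv_iff unfolding mla_ideal_def by auto
        ultimately show "x \<otimes>\<^bsub>G2\<^esub> h \<otimes>\<^bsub>G2\<^esub> inv\<^bsub>G2\<^esub> x \<in> \<mu> ` star_ideal G1" by auto
      qed
      have st: "\<forall>x\<in>carrier G2. \<forall>h\<in>\<mu> ` star_ideal G1. star G2 x h \<in> \<mu> ` star_ideal G1"
      proof (intro ballI)
        fix x h assume x: "x \<in> carrier G2" and h: "h \<in> \<mu> ` star_ideal G1"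
        obtain i where i: "i \<in> star_ideal G1" "h = \<mu> i" using h by auto
        obtain g c where gc: "g \<in> carrier G1" "c \<in> mla_center G2" "x = \<mu> g \<otimes>\<^bsub>G2\<^esub> c" using decomp x by blast
        have "star G2 x h = \<mu> (star G1 g i)"
          using mla_star_center_left[OF M2, of "\<mu> g" "\<mu> i" c] mus gc i sc by auto
        moreover have "star G1 g i \<in> star_ideal G1" using I1 gc i unfolding mla_ideal_def by auto
        ultimately show "star G2 x h \<in> \<mu> ` star_ideal G1" by auto
      qed
      show "mla_ideal (\<mu> ` star_ideal G1) G2" unfolding mla_ideal_def
        using sg cj st g2.normal_inv_iff by auto
      show "\<forall>a\<in>carrier G2. \<forall>b\<in>carrier G2. star G2 a b \<in> \<mu> ` star_ideal G1"
      proof (intro ballI)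
        fix a b assume a: "a \<in> carrier G2" and b: "b \<in> carrier G2"
        obtain g c where gc: "g \<in> carrier G1" "c \<in> mla_center G2" "a = \<mu> g \<otimes>\<^bsub>G2\<^esub> c" using decomp a by blast
        obtain g' c' where gc': "g' \<in> carrier G1" "c' \<in> mla_center G2" "b = \<mu> g' \<otimes>\<^bsub>G2\<^esub> c'" using decomp b by blast
        have "star G2 a b = \<mu> (star G1 g g')"
          using mla_star_center[OF M2 mu.hom_closed[OF gc(1)] mu.hom_closed[OF gc'(1)] gc(2) gc'(2)]
            mus[OF gc(1) gc'(1)] gc(3) gc'(3) by simp
        then show "star G2 a b \<in> \<mu> ` star_ideal G1" using si_star[OF gc(1) gc'(1)] by simp
      qed
    qed
  qed
  have ds_img: "\<mu> ` derived_set G1 (carrier G1) = derived_set G2 (carrier G2)"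
  proof
    show "\<mu> ` derived_set G1 (carrier G1) \<subseteq> derived_set G2 (carrier G2)"
      unfolding derived_set_commg using muc mu.hom_closed by blast
    show "derived_set G2 (carrier G2) \<subseteq> \<mu> ` derived_set G1 (carrier G1)"
    proof
      fix z assume "z \<in> derived_set G2 (carrier G2)"
      then obtain a b where ab: "a \<in> carrier G2" "b \<in> carrier G2" "z = commg G2 a b"
        unfolding derived_set_commg by auto
      obtain g c where gc: "g \<in> carrier G1" "c \<in> mla_center G2" "a = \<mu> g \<otimes>\<^bsub>G2\<^esub> c" using decomp ab by blast
      obtain g' c' where gc': "g' \<in> carrier G1" "c' \<in> mla_center G2" "b = \<mu> g' \<otimes>\<^bsub>G2\<^esub> c'" using decomp ab by blast
      have "z = \<mu> (commg G1 g g')"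
        using commg_center[OF g2.is_group, of "\<mu> g" "\<mu> g'" c c'] muc gc gc' ab cen by auto
      then show "z \<in> \<mu> ` derived_set G1 (carrier G1)" unfolding derived_set_commg using gc gc' by auto
    qed
  qed
  have d_img: "\<mu> ` derived G1 (carrier G1) = derived G2 (carrier G2)"
    unfolding derived_def using mu.generate_img[OF g1.derived_set_in_carrier[OF subset_refl]] ds_img by simp
  have M_img: "\<mu> ` M_comm G1 = M_comm G2"
    unfolding M_comm_def
    using set_mult_hom[OF muh si_carrier[OF M1] g1.derived_in_carrier[OF subset_refl]] si_img d_img by simp
  show ?thesis unfolding isoclinic_morphism_def bij_betw_def
    using mor nu_inj nu_surj mu_inj M_img cond by blast
qed

end
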